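(* Let $M$ be a compact Riemannian manifold, $X$ a $C^1$ vector field on $M$ with flow $X_t$, and $\Lambda$ a compact $X_t$-invariant set containing no zeros of $X$. Let $T_\Lambda M=E\oplus\langle X\rangle\oplus F$ be a partially dominated splitting over $\Lambda$. If $E$ (or $F$) is either uniformly contracting or uniformly expanding, then this splitting induces a dominated splitting over $\Lambda$ for $X_t$, namely one of $E\oplus(\langle X\rangle\oplus F)$ or $(E\oplus\langle X\rangle)\oplus F$ is a dominated splitting.
   Context: $\langle X\rangle$ is the line bundle spanned by the flow direction. For a linear map $L$ and subspace $F$, $\|L|_F\|=\sup_{v\in F,\|v\|=1}\|Lv\|$. A partially dominated splitting over $\Lambda$ is a continuous $DX_t$-invariant splitting $T_\Lambda M=E\oplus\langle X\rangle\oplus F$ with $E_x\neq\{0\}$, $F_x\neq\{0\}$ for all $x\in\Lambda$, and constants $K,\lambda>0$ such that $\|DX_t|_{E_x}\|\cdot\|DX_{-t}|_{F_{X_t(x)}}\|<Ke^{-\lambda t}$ for all $x\in\Lambda$, $t>0$. A dominated splitting over $\Lambda$ is a continuous $DX_t$-invariant splitting $T_\Lambda M=G\oplus H$ with $G_x,H_x\neq\{0\}$ and constants $K,\lambda>0$ such that $\|DX_t|_{G_x}\|\cdot\|DX_{-t}|_{H_{X_t(x)}}\|<Ke^{-\lambda t}$ for all $x\in\Lambda$, $t>0$. A subbundle $E$ is uniformly contracting if there are $C,\lambda>0$ with $\|DX_t|_{E_x}\|\le Ce^{-\lambda t}$ for all $x\in\Lambda$, $t\ge 0$; uniformly expanding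 if the same holds for $DX_{-t}$ (i.e. $\|DX_{-t}|_{E_{x}}\|\le Ce^{-\lambda t}$ for $t\ge0$). *)

theory Defs
  imports "HOL-Analysis.Analysis"
begin

definition c1_submanifold :: "'a::euclidean_space set \<Rightarrow> bool" where
  "c1_submanifold M \<longleftrightarrow>
    (\<forall>x\<in>M. \<exists>V W S (h::'a \<Rightarrow> 'a) (h'::'a \<Rightarrow> 'a \<Rightarrow>\<^sub>L 'a).
        open V \<and> x \<in> V \<and> open W \<and> subspace S \<and> bij_betw h V W \<and>
        (\<forall>y\<in>V. (h has_derivative blinfun_apply (h' y)) (at y)) \<and>
        continuous_on V h' \<and>
        (\<forall>y\<in>V. bij (blinfun_apply (h' y))) \<and>
        h ` (M \<inter> V) = S \<inter> W)"

definition tangent_space :: "'a::euclidean_space set \<Rightarrow> 'a \<Rightarrow> 'a set" where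
  "tangent_space M x = {v. \<exists>(\<gamma>::real \<Rightarrow> 'a) e. e > 0 \<and> (\<forall>t\<in>{-e<..<e}. \<gamma> t \<in> M) \<and>
      \<gamma> 0 = x \<and> (\<gamma> has_vector_derivative v) (at 0)}"

definition c1_field :: "('a::euclidean_space \<Rightarrow> 'a) \<Rightarrow> bool" where
  "c1_field X \<longleftrightarrow> (\<exists>X'::'a \<Rightarrow> 'a \<Rightarrow>\<^sub>L 'a.
      (\<forall>y. (X has_derivative blinfun_apply (X' y)) (at y)) \<and> continuous_on UNIV X')"

definition subsum :: "'a::real_vector set \<Rightarrow> 'a set \<Rightarrow> 'a set" where
  "subsum A B = {a + b | a b. a \<in> A \<and> b \<in> B}"

definition restr_norm :: "('a::real_normed_vector \<Rightarrow> 'b::real_normed_vector) \<Rightarrow> 'a set \<Rightarrow> real" where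
  "restr_norm L S = (SUP v\<in>{v\<in>S. norm v = 1}. norm (L v))"

text \<open>A subspace-valued map over Lambda is continuous iff the orthogonal projections onto
  its fibres depend continuously on the base point.\<close>
definition continuous_subbundle :: "'a::euclidean_space set \<Rightarrow> ('a \<Rightarrow> 'a set) \<Rightarrow> bool" where
  "continuous_subbundle \<Lambda> E \<longleftrightarrow> (\<forall>v. continuous_on \<Lambda> (\<lambda>x. closest_point (E x) v))"

definition invariant_subbundle ::
  "'a set \<Rightarrow> (real \<Rightarrow> 'a \<Rightarrow> 'a) \<Rightarrow> (real \<Rightarrow> 'a \<Rightarrow> 'a \<Rightarrow> 'a) \<Rightarrow> ('a \<Rightarrow> 'a set) \<Rightarrow> bool" where
  "invariant_subbundle \<Lambda> \<phi> D E \<longleftrightarrow> (\<forall>x\<in>\<Lambda>. \<forall>t. D t x ` E x = E (\<phi> t x))"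

definition dominated_splitting ::
  "'a::euclidean_space set \<Rightarrow> 'a set \<Rightarrow> (real \<Rightarrow> 'a \<Rightarrow> 'a) \<Rightarrow> (real \<Rightarrow> 'a \<Rightarrow> 'a \<Rightarrow> 'a)
    \<Rightarrow> ('a \<Rightarrow> 'a set) \<Rightarrow> ('a \<Rightarrow> 'a set) \<Rightarrow> bool" where
  "dominated_splitting M \<Lambda> \<phi> D G H \<longleftrightarrow>
     (\<forall>x\<in>\<Lambda>. subspace (G x) \<and> subspace (H x) \<and> G x \<noteq> {0} \<and> H x \<noteq> {0} \<and>
        G x \<inter> H x = {0} \<and> subsum (G x) (H x) = tangent_space M x) \<and>
     invariant_subbundle \<Lambda> \<phi> D G \<and> invariant_subbundle \<Lambda> \<phi> D H \<and>
     continuous_subbundle \<Lambda> G \<and> continuous_subbundle \<Lambda> H \<and>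
     (\<exists>K lam. K > 0 \<and> lam > 0 \<and> (\<forall>x\<in>\<Lambda>. \<forall>t>0.
        restr_norm (D t x) (G x) * restr_norm (D (-t) (\<phi> t x)) (H (\<phi> t x)) < K * exp (-lam * t)))"

definition partially_dominated_splitting ::
  "'a::euclidean_space set \<Rightarrow> 'a set \<Rightarrow> ('a \<Rightarrow> 'a) \<Rightarrow> (real \<Rightarrow> 'a \<Rightarrow> 'a) \<Rightarrow> (real \<Rightarrow> 'a \<Rightarrow> 'a \<Rightarrow> 'a)
    \<Rightarrow> ('a \<Rightarrow> 'a set) \<Rightarrow> ('a \<Rightarrow> 'a set) \<Rightarrow> bool" where
  "partially_dominated_splitting M \<Lambda> X \<phi> D E F \<longleftrightarrow>
     (\<forall>x\<in>\<Lambda>. subspace (E x) \<and> subspace (F x) \<and> E x \<noteq> {0} \<and> F x \<noteq> {0} \<and>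
        (\<forall>a b c. a \<in> E x \<and> b \<in> span {X x} \<and> c \<in> F x \<and> a + b + c = 0 \<longrightarrow>
                 a = 0 \<and> b = 0 \<and> c = 0) \<and>
        subsum (subsum (E x) (span {X x})) (F x) = tangent_space M x) \<and>
     invariant_subbundle \<Lambda> \<phi> D E \<and> invariant_subbundle \<Lambda> \<phi> D F \<and>
     continuous_subbundle \<Lambda> E \<and> continuous_subbundle \<Lambda> F \<and>
     (\<exists>K lam. K > 0 \<and> lam > 0 \<and> (\<forall>x\<in>\<Lambda>. \<forall>t>0.
        restr_norm (D t x) (E x) * restr_norm (D (-t) (\<phi> t x)) (F (\<phi> t x)) < K * exp (-lam * t)))"

definition uniformly_contracting ::
  "'a::real_normed_vector set \<Rightarrow> (real \<Rightarrow> 'a \<Rightarrow> 'a \<Rightarrow> 'a) \<Rightarrow> ('a \<Rightarrow> 'a set) \<Rightarrow> bool" where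
  "uniformly_contracting \<Lambda> D E \<longleftrightarrow> (\<exists>C lam. C > 0 \<and> lam > 0 \<and>
     (\<forall>x\<in>\<Lambda>. \<forall>t\<ge>0. restr_norm (D t x) (E x) \<le> C * exp (-lam * t)))"

definition uniformly_expanding ::
  "'a::real_normed_vector set \<Rightarrow> (real \<Rightarrow> 'a \<Rightarrow> 'a \<Rightarrow> 'a) \<Rightarrow> ('a \<Rightarrow> 'a set) \<Rightarrow> bool" where
  "uniformly_expanding \<Lambda> D E \<longleftrightarrow> (\<exists>C lam. C > 0 \<and> lam > 0 \<and>
     (\<forall>x\<in>\<Lambda>. \<forall>t\<ge>0. restr_norm (D (-t) x) (E x) \<le> C * exp (-lam * t)))"

end

theory Submission
  imports Defs
begin

lemma rn_bdd:
  assumes "bounded_linear L"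
  shows "bdd_above ((\<lambda>v. norm (L v)) ` {v\<in>S. norm v = 1})"
proof -
  obtain B where B: "\<And>v. norm (L v) \<le> norm v * B"
    using bounded_linear.bounded[OF assms] by blast
  show ?thesis by (intro bdd_aboveI2[where M=B]) (metis (mono_tags) B mem_Collect_eq mult_1)
qed

lemma rn_ge:
  assumes "bounded_linear L" "v \<in> S" "norm v = 1"
  shows "norm (L v) \<le> restr_norm L S"
  unfolding restr_norm_def
  using assms rn_bdd[OF assms(1), of S] by (intro cSUP_upper[where f="\<lambda>v. norm (L v)"]) auto

lemma rn_vec:
  assumes "bounded_linear L" "subspace S" "v \<in> S"
  shows "norm (L v) \<le> restr_norm L S * norm v"
proof (cases "v = 0")
  case True
  then show ?thesis using linear_0[OF bounded_linear.linear[OF assms(1)]] by simp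
next
  case False
  have "norm (L (v /\<^sub>R norm v)) \<le> restr_norm L S"
    by (rule rn_ge[OF assms(1)]) (use assms False subspace_scale in auto)
  moreover have "L (v /\<^sub>R norm v) = L v /\<^sub>R norm v"
    using linear_scale[OF bounded_linear.linear[OF assms(1)]] by simp
  ultimately show ?thesis using False by (simp add: divide_simps)
qed

lemma unit_in_sub:
  assumes "subspace S" "S \<noteq> {0}"
  shows "\<exists>v\<in>S. norm v = 1"
proof -
  obtain w where "w \<in> S" "w \<noteq> 0" using assms subspace_0 by blast
  then show ?thesis using assms(1) subspace_scale by (intro bexI[of _ "w /\<^sub>R norm w"]) auto
qed

lemma rn_le:
  assumes "subspace S" "S \<noteq> {0}" "\<And>v. v \<in> S \<Longrightarrow> norm v = 1 \<Longrightarrow> norm (L v) \<le> B"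
  shows "restr_norm L S \<le> B"
  unfolding restr_norm_def
  by (rule cSUP_least) (use assms unit_in_sub in auto)

lemma rn_nonneg:
  assumes "bounded_linear L" "subspace S" "S \<noteq> {0}"
  shows "0 \<le> restr_norm L S"
  using unit_in_sub[OF assms(2,3)] rn_ge[OF assms(1)] norm_ge_zero order_trans by blast

lemma ode_unique_fwd:
  fixes p q :: "real \<Rightarrow> 'a::real_inner"
  assumes K1: "\<And>t. p t \<in> K" and K2: "\<And>t. q t \<in> K"
    and d1: "\<And>t. (p has_vector_derivative f (p t)) (at t)"
    and d2: "\<And>t. (q has_vector_derivative f (q t)) (at t)"
    and init: "p 0 = q 0"
    and lip: "\<And>a b. a \<in> K \<Longrightarrow> b \<in> K \<Longrightarrow> norm (f a - f b) \<le> L * norm (a - b)"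
    and t: "t \<ge> 0"
  shows "p t = q t"
proof -
  define w where "w s = p s - q s" for s
  define d where "d s = f (p s) - f (q s)" for s
  define h where "h s = inner (w s) (w s) * exp (- 2 * L * s)" for s
  have dw: "(w has_vector_derivative d s) (at s)" for s
    unfolding w_def d_def by (intro has_vector_derivative_diff d1 d2)
  have dww: "((\<lambda>s. w s \<bullet> w s) has_real_derivative 2 * (w s \<bullet> d s)) (at s)" for s
  proof -
    have "((\<lambda>s. w s \<bullet> w s) has_derivative (\<lambda>x. w s \<bullet> (x *\<^sub>R d s) + (x *\<^sub>R d s) \<bullet> w s)) (at s)"
      using has_derivative_inner[OF dw[unfolded has_vector_derivative_def] dw[unfolded has_vector_derivative_def]] .
    moreover have "(\<lambda>x. w s \<bullet> (x *\<^sub>R d s) + (x *\<^sub>R d s) \<bullet> w s) = (*) (2 * (w s \<bullet> d s))"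
      by (auto simp: inner_commute algebra_simps)
    ultimately show ?thesis by (simp add: has_field_derivative_def)
  qed
  have dh: "(h has_real_derivative (2 * (w s \<bullet> d s) * exp (- 2 * L * s) + (w s \<bullet> w s) * (exp (- 2 * L * s) * (- 2 * L)))) (at s)" for s
  proof -
    have "((\<lambda>s. exp (- 2 * L * s)) has_real_derivative exp (- 2 * L * s) * (- 2 * L)) (at s)"
      by (auto intro!: derivative_eq_intros)
    from DERIV_mult[OF dww this] show ?thesis unfolding h_def by (simp add: mult.commute)
  qed
  have le: "2 * (w s \<bullet> d s) * exp (- 2 * L * s) + (w s \<bullet> w s) * (exp (- 2 * L * s) * (- 2 * L)) \<le> 0" for s
  proof -
    have "w s \<bullet> d s \<le> norm (w s) * norm (d s)" by (rule norm_cauchy_schwarz)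
    also have "\<dots> \<le> norm (w s) * (L * norm (w s))"
      unfolding d_def w_def by (intro mult_left_mono lip K1 K2) auto
    also have "\<dots> = L * (w s \<bullet> w s)" by (simp add: power2_norm_eq_inner[symmetric] power2_eq_square)
    finally have "w s \<bullet> d s \<le> L * (w s \<bullet> w s)" .
    then have "2 * (w s \<bullet> d s) * exp (- 2 * L * s) \<le> 2 * (L * (w s \<bullet> w s)) * exp (- 2 * L * s)"
      by (intro mult_right_mono) auto
    then show ?thesis by (simp add: algebra_simps)
  qed
  have "h t \<le> h 0"
    by (rule DERIV_nonpos_imp_nonincreasing[OF t]) (use dh le in blast)
  moreover have "h 0 = 0" by (simp add: h_def w_def init)
  moreover have "h t \<ge> 0" by (simp add: h_def)
  ultimately have "(w t \<bullet> w t) * exp (- 2 * L * t) = 0" unfolding h_def by linarith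
  then have "w t = 0" by simp
  then show ?thesis by (simp add: w_def)
qed

lemma ode_unique:
  fixes p q :: "real \<Rightarrow> 'a::real_inner"
  assumes K1: "\<And>t. p t \<in> K" and K2: "\<And>t. q t \<in> K"
    and d1: "\<And>t. (p has_vector_derivative f (p t)) (at t)"
    and d2: "\<And>t. (q has_vector_derivative f (q t)) (at t)"
    and init: "p 0 = q 0"
    and lip: "\<And>a b. a \<in> K \<Longrightarrow> b \<in> K \<Longrightarrow> norm (f a - f b) \<le> L * norm (a - b)"
  shows "p t = q t"
proof (cases "t \<ge> 0")
  case True
  then show ?thesis using ode_unique_fwd[OF assms] by blast
next
  case False
  have r: "((\<lambda>s. y (-s)) has_vector_derivative (- f (y (-s)))) (at s)"
    if "\<And>t. (y has_vector_derivative f (y t)) (at t)" for y :: "real \<Rightarrow> 'a" and s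
  proof -
    have "((y \<circ> uminus) has_vector_derivative ((-1) *\<^sub>R f (y (-s)))) (at s)"
      by (intro vector_diff_chain_at that) (auto intro!: derivative_eq_intros)
    then show ?thesis by (simp add: o_def)
  qed
  have lip': "norm ((- f a) - (- f b)) \<le> L * norm (a - b)" if "a \<in> K" "b \<in> K" for a b
    using lip[OF that] by (simp add: norm_minus_commute)
  have "(\<lambda>s. p (-s)) (-t) = (\<lambda>s. q (-s)) (-t)"
    by (rule ode_unique_fwd[where K=K and f="\<lambda>x. - f x" and L=L and p="\<lambda>s. p (-s)" and q="\<lambda>s. q (-s)"],
        simp add: K1, simp add: K2, rule r[OF d1], rule r[OF d2], simp add: init, rule lip', assumption+)
       (use False in simp)
  then show ?thesis by simp
qed

lemma X_lip:
  fixes X :: "'a::euclidean_space \<Rightarrow> 'a"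
  assumes "c1_field X" "compact M"
  obtains L where "\<And>a b. a \<in> M \<Longrightarrow> b \<in> M \<Longrightarrow> norm (X a - X b) \<le> L * norm (a - b)"
proof -
  obtain X' :: "'a \<Rightarrow> 'a \<Rightarrow>\<^sub>L 'a" where d: "\<And>y. (X has_derivative blinfun_apply (X' y)) (at y)"
    and c: "continuous_on UNIV X'"
    using assms(1) unfolding c1_field_def by blast
  define S where "S = convex hull M"
  have "compact S" unfolding S_def by (rule compact_convex_hull[OF assms(2)])
  then have "compact (X' ` S)" by (rule compact_continuous_image[OF continuous_on_subset[OF c subset_UNIV]])
  then have "bounded (X' ` S)" by (rule compact_imp_bounded)
  then obtain B where B0: "\<forall>z\<in>X' ` S. norm z \<le> B" unfolding bounded_iff by blast
  have B: "norm (X' y) \<le> B" if "y \<in> S" for y using B0 that by blast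
  have "norm (X a - X b) \<le> B * norm (a - b)" if "a \<in> M" "b \<in> M" for a b
  proof (rule differentiable_bound[where S=S and f'="\<lambda>y. blinfun_apply (X' y)"])
    show "convex S" unfolding S_def by simp
    show "(X has_derivative blinfun_apply (X' x)) (at x within S)" for x
      by (rule has_derivative_at_withinI[OF d])
    show "onorm (blinfun_apply (X' x)) \<le> B" if "x \<in> S" for x
      using B[OF that] by (simp add: norm_blinfun.rep_eq)
    show "a \<in> S" "b \<in> S" using that hull_subset[of M convex] unfolding S_def by blast+
  qed
  then show ?thesis by (rule that)
qed

lemma shift_deriv:
  assumes "\<And>t. ((\<lambda>s. \<phi> s x) has_vector_derivative X (\<phi> t x)) (at t)"
  shows "((\<lambda>t. \<phi> (t + s) x) has_vector_derivative X (\<phi> (t + s) x)) (at t)"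
proof -
  have "(((\<lambda>u. \<phi> u x) \<circ> (\<lambda>t. t + s)) has_vector_derivative (1 *\<^sub>R X (\<phi> (t + s) x))) (at t)"
    by (intro vector_diff_chain_at assms) (auto intro!: derivative_eq_intros)
  then show ?thesis by (simp add: o_def)
qed

lemma flow_group:
  fixes X :: "'a::euclidean_space \<Rightarrow> 'a"
  assumes "c1_field X" "compact M"
    and flow: "\<forall>x\<in>M. \<phi> 0 x = x \<and> (\<forall>t. \<phi> t x \<in> M \<and>
                 ((\<lambda>s. \<phi> s x) has_vector_derivative X (\<phi> t x)) (at t))"
    and x: "x \<in> M"
  shows "\<phi> t (\<phi> s x) = \<phi> (t + s) x"
proof -
  obtain L where L: "\<And>a b. a \<in> M \<Longrightarrow> b \<in> M \<Longrightarrow> norm (X a - X b) \<le> L * norm (a - b)"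
    using X_lip[OF assms(1,2)] by blast
  have sx: "\<phi> s x \<in> M" using flow x by blast
  show ?thesis
  proof (rule ode_unique[where K=M and f=X and L=L and p="\<lambda>t. \<phi> t (\<phi> s x)" and q="\<lambda>t. \<phi> (t + s) x"])
    show "\<phi> t (\<phi> s x) \<in> M" for t using flow sx by blast
    show "\<phi> (t + s) x \<in> M" for t using flow x by blast
    show "((\<lambda>t. \<phi> t (\<phi> s x)) has_vector_derivative X (\<phi> t (\<phi> s x))) (at t)" for t
      using flow sx by blast
    show "((\<lambda>t. \<phi> (t + s) x) has_vector_derivative X (\<phi> (t + s) x)) (at t)" for t
      by (rule shift_deriv) (use flow x in blast)
    show "\<phi> 0 (\<phi> s x) = \<phi> (0 + s) x" using flow sx by simp
  qed (use L in auto)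
qed

lemma D_X:
  fixes X :: "'a::euclidean_space \<Rightarrow> 'a"
  assumes "c1_field X" "compact M"
    and flow: "\<forall>x\<in>M. \<phi> 0 x = x \<and> (\<forall>t. \<phi> t x \<in> M \<and>
                 ((\<lambda>s. \<phi> s x) has_vector_derivative X (\<phi> t x)) (at t))"
    and deriv: "\<forall>x\<in>M. \<forall>t. (\<phi> t has_derivative D t x) (at x within M)"
    and x: "x \<in> M"
  shows "D t x (X x) = X (\<phi> t x)"
proof -
  have g: "((\<lambda>s. \<phi> s x) has_derivative (\<lambda>h. h *\<^sub>R X x)) (at 0)"
    using flow x by (metis has_vector_derivative_def)
  have img: "(\<lambda>s. \<phi> s x) ` UNIV \<subseteq> M" using flow x by blast
  have dx: "(\<phi> t has_derivative D t x) (at x within M)" using deriv x by blast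
  have "(\<phi> t has_derivative D t x) (at ((\<lambda>s. \<phi> s x) 0) within ((\<lambda>s. \<phi> s x) ` UNIV))"
    using has_derivative_subset[OF dx img] flow x by simp
  from has_derivative_in_compose[OF g this]
  have c1: "((\<lambda>s. \<phi> t (\<phi> s x)) has_derivative (\<lambda>h. D t x (h *\<^sub>R X x))) (at 0)" by simp
  have eq: "(\<lambda>s. \<phi> t (\<phi> s x)) = (\<lambda>s. \<phi> (s + t) x)"
    using flow_group[OF assms(1,2) flow x] by (simp add: add.commute)
  have "((\<lambda>s. \<phi> (s + t) x) has_vector_derivative X (\<phi> (0 + t) x)) (at 0)"
    by (rule shift_deriv) (use flow x in blast)
  then have c2: "((\<lambda>s. \<phi> t (\<phi> s x)) has_derivative (\<lambda>h. h *\<^sub>R X (\<phi> t x))) (at 0)"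
    unfolding eq has_vector_derivative_def by simp
  have "(\<lambda>h. D t x (h *\<^sub>R X x)) = (\<lambda>h. h *\<^sub>R X (\<phi> t x))"
    by (rule has_derivative_unique[OF c1 c2])
  from fun_cong[OF this, of 1] show ?thesis by simp
qed

lemma D_inv:
  fixes X :: "'a::euclidean_space \<Rightarrow> 'a"
  assumes "c1_field X" "compact M"
    and flow: "\<forall>x\<in>M. \<phi> 0 x = x \<and> (\<forall>t. \<phi> t x \<in> M \<and>
                 ((\<lambda>s. \<phi> s x) has_vector_derivative X (\<phi> t x)) (at t))"
    and deriv: "\<forall>x\<in>M. \<forall>t. (\<phi> t has_derivative D t x) (at x within M)"
    and x: "x \<in> M" and v: "v \<in> tangent_space M x"
  shows "D (-t) (\<phi> t x) (D t x v) = v"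
proof -
  obtain \<gamma> :: "real \<Rightarrow> 'a" and e where e: "e > 0" and gM: "\<forall>s\<in>{-e<..<e}. \<gamma> s \<in> M"
    and g0: "\<gamma> 0 = x" and gd: "(\<gamma> has_vector_derivative v) (at 0)"
    using v unfolding tangent_space_def by blast
  define T where "T = {-e<..<e}"
  have T: "open T" "0 \<in> T" using e unfolding T_def by auto
  have g: "(\<gamma> has_derivative (\<lambda>h. h *\<^sub>R v)) (at 0 within T)"
    using gd has_derivative_at_withinI unfolding has_vector_derivative_def by blast
  have img1: "\<gamma> ` T \<subseteq> M" using gM unfolding T_def by blast
  have dx: "(\<phi> t has_derivative D t x) (at x within M)" using deriv x by blast
  have "(\<phi> t has_derivative D t x) (at (\<gamma> 0) within (\<gamma> ` T))"
    using has_derivative_subset[OF dx img1] g0 by simp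
  from has_derivative_in_compose[OF g this]
  have c1: "((\<lambda>s. \<phi> t (\<gamma> s)) has_derivative (\<lambda>h. D t x (h *\<^sub>R v))) (at 0 within T)" by simp
  have img2: "(\<lambda>s. \<phi> t (\<gamma> s)) ` T \<subseteq> M" using img1 flow by blast
  have "\<phi> t x \<in> M" using flow x by blast
  then have dtx: "(\<phi> (-t) has_derivative D (-t) (\<phi> t x)) (at (\<phi> t x) within M)" using deriv by blast
  have "(\<phi> (-t) has_derivative D (-t) (\<phi> t x)) (at ((\<lambda>s. \<phi> t (\<gamma> s)) 0) within ((\<lambda>s. \<phi> t (\<gamma> s)) ` T))"
    using has_derivative_subset[OF dtx img2] g0 by simp
  from has_derivative_in_compose[OF c1 this]
  have c2: "((\<lambda>s. \<phi> (-t) (\<phi> t (\<gamma> s))) has_derivative (\<lambda>h. D (-t) (\<phi> t x) (D t x (h *\<^sub>R v)))) (at 0 within T)"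
    by simp
  have "((\<lambda>s. \<gamma> s) has_derivative (\<lambda>h. D (-t) (\<phi> t x) (D t x (h *\<^sub>R v)))) (at 0 within T)"
  proof (rule has_derivative_transform_within_open[OF c2 T])
    fix s assume "s \<in> T"
    then have "\<gamma> s \<in> M" using img1 by blast
    then show "\<phi> (-t) (\<phi> t (\<gamma> s)) = \<gamma> s"
      using flow_group[OF assms(1,2) flow, of "\<gamma> s" "-t" t] flow by simp
  qed
  then have c3: "(\<gamma> has_derivative (\<lambda>h. D (-t) (\<phi> t x) (D t x (h *\<^sub>R v)))) (at 0)"
    using at_within_open[OF T(2,1)] by simp
  have "(\<lambda>h. D (-t) (\<phi> t x) (D t x (h *\<^sub>R v))) = (\<lambda>h. h *\<^sub>R v)"
    by (rule has_derivative_unique[OF c3 gd[unfolded has_vector_derivative_def]])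
  from fun_cong[OF this, of 1] show ?thesis by simp
qed

lemma subsum_span:
  assumes "subspace A" "subspace B"
  shows "subsum A B = span (A \<union> B)"
proof -
  have sA: "span A = A" and sB: "span B = B" using assms span_eq_iff by blast+
  have "subsum A B = {x + y |x y. x \<in> span A \<and> y \<in> span B}" unfolding subsum_def sA sB by (rule refl)
  then show ?thesis using span_Un[of A B] by simp
qed

lemma subsum_subspace: "subspace A \<Longrightarrow> subspace B \<Longrightarrow> subspace (subsum A B)"
  by (simp add: subsum_span)

lemma subsum_commute: "subsum A B = subsum B A"
  unfolding subsum_def by (auto simp: add.commute) (metis add.commute)+

lemma subsum_assoc: "subsum A (subsum B C) = subsum (subsum A B) C"
  unfolding subsum_def by (auto simp: add.assoc) (metis add.assoc)+

lemma subsum_image: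
  assumes "linear L"
  shows "L ` subsum A B = subsum (L ` A) (L ` B)"
  unfolding subsum_def
  by (auto simp: image_iff) (metis linear_add[OF assms])+

lemma proj_orth:
  fixes S :: "'a::euclidean_space set"
  assumes "subspace S" "y \<in> S"
  shows "(v - closest_point S v) \<bullet> y = 0"
proof -
  let ?p = "closest_point S v"
  have cl: "closed S" "convex S" "S \<noteq> {}"
    using assms closed_subspace subspace_imp_convex subspace_0 by blast+
  have p: "?p \<in> S" using closest_point_in_set cl by blast
  have "(v - ?p) \<bullet> ((?p + y) - ?p) \<le> 0"
    by (rule closest_point_dot) (use cl p assms subspace_add in auto)
  moreover have "(v - ?p) \<bullet> ((?p - y) - ?p) \<le> 0"
    by (rule closest_point_dot) (use cl p assms subspace_diff in auto)
  ultimately show ?thesis by (simp add: inner_diff_right)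
qed

lemma proj_char:
  fixes S :: "'a::euclidean_space set"
  assumes "subspace S" "p \<in> S" "\<And>y. y \<in> S \<Longrightarrow> (v - p) \<bullet> y = 0"
  shows "closest_point S v = p"
proof -
  have cl: "closed S" "convex S"
    using assms closed_subspace subspace_imp_convex by blast+
  have "dist v p \<le> dist v z" if "z \<in> S" for z
  proof -
    have "p - z \<in> S" using assms that subspace_diff by blast
    then have o: "(v - p) \<bullet> (p - z) = 0" using assms by blast
    have "v - z = (v - p) + (p - z)" by simp
    then have "norm (v - z)^2 = norm (v - p)^2 + norm (p - z)^2"
      using o norm_add_Pythagorean[of "v - p" "p - z"] by (simp add: orthogonal_def)
    then have "norm (v - p)^2 \<le> norm (v - z)^2" by simp
    then show ?thesis by (simp add: dist_norm power2_le_iff_abs_le)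
  qed
  then show ?thesis using closest_point_unique[OF cl(2,1) assms(2)] by metis
qed

lemma span_single: "span {X} = range (\<lambda>k. k *\<^sub>R X)"
  by (auto simp: span_singleton)

lemma sum_proj:
  fixes S :: "'a::euclidean_space set"
  assumes S: "subspace S" and X: "X \<notin> S"
  defines "u \<equiv> X - closest_point S X"
  shows "closest_point (subsum S (span {X})) v =
           closest_point S v + (((v - closest_point S v) \<bullet> u) / (u \<bullet> u)) *\<^sub>R u"
proof (rule proj_char)
  let ?p = "closest_point S"
  let ?c = "((v - ?p v) \<bullet> u) / (u \<bullet> u)"
  have cl: "closed S" "S \<noteq> {}" using S closed_subspace subspace_0 by blast+
  have pin: "?p w \<in> S" for w using closest_point_in_set cl by blast
  have u0: "u \<noteq> 0" using X pin[of X] unfolding u_def by auto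
  have uS: "u \<bullet> y = 0" if "y \<in> S" for y
    using proj_orth[OF S that, of X] unfolding u_def by simp
  show "subspace (subsum S (span {X}))" using S by (simp add: subsum_subspace)
  have "?p v + ?c *\<^sub>R u = (?p v - ?c *\<^sub>R ?p X) + ?c *\<^sub>R X" unfolding u_def by (simp add: algebra_simps)
  moreover have "?p v - ?c *\<^sub>R ?p X \<in> S" using pin S by (simp add: subspace_diff subspace_scale)
  moreover have "?c *\<^sub>R X \<in> span {X}" by (simp add: span_base span_scale)
  ultimately show "?p v + ?c *\<^sub>R u \<in> subsum S (span {X})" unfolding subsum_def by blast
  have o1: "(v - (?p v + ?c *\<^sub>R u)) \<bullet> y = 0" if "y \<in> S" for y
    using proj_orth[OF S that, of v] uS[OF that] by (simp add: inner_diff_left inner_add_left)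
  have uu: "u \<bullet> u \<noteq> 0" using u0 by simp
  have "(v - (?p v + ?c *\<^sub>R u)) \<bullet> u = (v - ?p v) \<bullet> u - ?c * (u \<bullet> u)"
    by (simp add: inner_diff_left inner_add_left algebra_simps)
  also have "\<dots> = 0" using uu by simp
  finally have o2: "(v - (?p v + ?c *\<^sub>R u)) \<bullet> u = 0" .
  have o3: "(v - (?p v + ?c *\<^sub>R u)) \<bullet> X = 0"
  proof -
    have "X = u + ?p X" unfolding u_def by simp
    then show ?thesis using o1[OF pin[of X]] o2 by (metis inner_add_right add.right_neutral)
  qed
  fix y assume "y \<in> subsum S (span {X})"
  then obtain a k where "y = a + k *\<^sub>R X" "a \<in> S" unfolding subsum_def span_single by blast
  then show "(v - (?p v + ?c *\<^sub>R u)) \<bullet> y = 0"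
    using o1 o3 by (simp add: inner_add_right)
qed

lemma joint_cont:
  fixes E :: "'a::euclidean_space \<Rightarrow> 'a set"
  assumes cE: "continuous_subbundle \<Lambda> E" and sE: "\<forall>x\<in>\<Lambda>. subspace (E x)"
    and cX: "continuous_on \<Lambda> X"
  shows "continuous_on \<Lambda> (\<lambda>x. closest_point (E x) (X x))"
  unfolding continuous_on_def
proof (intro ballI)
  fix x0 assume x0: "x0 \<in> \<Lambda>"
  have t1: "((\<lambda>x. closest_point (E x) (X x0)) \<longlongrightarrow> closest_point (E x0) (X x0)) (at x0 within \<Lambda>)"
    using cE x0 unfolding continuous_subbundle_def continuous_on_def by blast
  have tX: "((\<lambda>x. X x - X x0) \<longlongrightarrow> 0) (at x0 within \<Lambda>)"
    using cX x0 unfolding continuous_on_def by (simp add: LIM_zero)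
  have t2: "((\<lambda>x. closest_point (E x) (X x) - closest_point (E x) (X x0)) \<longlongrightarrow> 0) (at x0 within \<Lambda>)"
  proof (rule Lim_null_comparison[OF _ tendsto_norm_zero[OF tX]])
    show "\<forall>\<^sub>F x in at x0 within \<Lambda>. norm (closest_point (E x) (X x) - closest_point (E x) (X x0)) \<le> norm (X x - X x0)"
      unfolding eventually_at_filter
    proof (intro always_eventually allI impI)
      fix x assume "x \<in> \<Lambda>"
      then have "subspace (E x)" using sE by blast
      then have "convex (E x)" "closed (E x)" "E x \<noteq> {}"
        using closed_subspace subspace_imp_convex subspace_0 by blast+
      from closest_point_lipschitz[OF this, of "X x" "X x0"]
      show "norm (closest_point (E x) (X x) - closest_point (E x) (X x0)) \<le> norm (X x - X x0)"
        by (simp add: dist_norm)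
    qed
  qed
  show "((\<lambda>x. closest_point (E x) (X x)) \<longlongrightarrow> closest_point (E x0) (X x0)) (at x0 within \<Lambda>)"
    using tendsto_add[OF t2 t1] by simp
qed

lemma sum_bundle_cont:
  fixes E :: "'a::euclidean_space \<Rightarrow> 'a set"
  assumes cE: "continuous_subbundle \<Lambda> E" and sE: "\<forall>x\<in>\<Lambda>. subspace (E x)"
    and cX: "continuous_on \<Lambda> X" and XE: "\<forall>x\<in>\<Lambda>. X x \<notin> E x"
  shows "continuous_subbundle \<Lambda> (\<lambda>x. subsum (E x) (span {X x}))"
  unfolding continuous_subbundle_def
proof
  fix v
  define u where "u x = X x - closest_point (E x) (X x)" for x
  have cu: "continuous_on \<Lambda> u" unfolding u_def by (intro continuous_intros cX joint_cont[OF cE sE cX])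
  have u0: "u x \<bullet> u x \<noteq> 0" if "x \<in> \<Lambda>" for x
  proof -
    have "closed (E x)" "E x \<noteq> {}" using sE that closed_subspace subspace_0 by blast+
    then have "closest_point (E x) (X x) \<in> E x" by (rule closest_point_in_set)
    then show ?thesis using XE that unfolding u_def by auto
  qed
  have cp: "continuous_on \<Lambda> (\<lambda>x. closest_point (E x) v)" using cE unfolding continuous_subbundle_def by blast
  have "continuous_on \<Lambda> (\<lambda>x. closest_point (E x) v + (((v - closest_point (E x) v) \<bullet> u x) / (u x \<bullet> u x)) *\<^sub>R u x)"
    by (intro continuous_intros cp cu) (use u0 in auto)
  then show "continuous_on \<Lambda> (\<lambda>x. closest_point (subsum (E x) (span {X x})) v)"
  proof (rule continuous_on_cong[THEN iffD1, rotated -1])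
    fix x assume x: "x \<in> \<Lambda>"
    show "closest_point (E x) v + (((v - closest_point (E x) v) \<bullet> u x) / (u x \<bullet> u x)) *\<^sub>R u x
          = closest_point (subsum (E x) (span {X x})) v"
      unfolding u_def using sum_proj[of "E x" "X x" v] sE XE x by simp
  qed simp
qed

lemma coeff_bound:
  fixes S :: "'a::euclidean_space set"
  assumes S: "subspace S" and f: "f \<in> S" and m: "m \<le> norm (X - closest_point S X)"
  shows "\<bar>a\<bar> * m \<le> norm (a *\<^sub>R X + f)"
proof (cases "a = 0")
  case True
  then show ?thesis by simp
next
  case False
  have cl: "closed S" using S closed_subspace by blast
  have "-(f /\<^sub>R a) \<in> S" using S f subspace_neg subspace_scale by blast
  from closest_point_le[OF cl this, of X]
  have "norm (X - closest_point S X) \<le> norm (X + f /\<^sub>R a)" by (simp add: dist_norm)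
  then have "\<bar>a\<bar> * m \<le> \<bar>a\<bar> * norm (X + f /\<^sub>R a)" using m by (intro mult_left_mono) auto
  also have "\<dots> = norm (a *\<^sub>R (X + f /\<^sub>R a))" by simp
  also have "a *\<^sub>R (X + f /\<^sub>R a) = a *\<^sub>R X + f" using False by (simp add: algebra_simps)
  finally show ?thesis .
qed

lemma m_bound:
  fixes E :: "'a::euclidean_space \<Rightarrow> 'a set"
  assumes "compact \<Lambda>" "continuous_subbundle \<Lambda> E" "\<forall>x\<in>\<Lambda>. subspace (E x)"
    "continuous_on \<Lambda> X" "\<forall>x\<in>\<Lambda>. X x \<notin> E x"
  obtains m where "m > 0" "\<And>x. x \<in> \<Lambda> \<Longrightarrow> m \<le> norm (X x - closest_point (E x) (X x))"
proof (cases "\<Lambda> = {}")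
  case True
  then show ?thesis using that[of 1] by auto
next
  case False
  have c: "continuous_on \<Lambda> (\<lambda>x. norm (X x - closest_point (E x) (X x)))"
    by (intro continuous_intros assms(4) joint_cont[OF assms(2,3,4)])
  obtain x0 where x0: "x0 \<in> \<Lambda>" and mn: "\<And>y. y \<in> \<Lambda> \<Longrightarrow>
      norm (X x0 - closest_point (E x0) (X x0)) \<le> norm (X y - closest_point (E y) (X y))"
    using continuous_attains_inf[OF assms(1) False c] by blast
  have "closed (E x0)" "E x0 \<noteq> {}" using assms(3) x0 closed_subspace subspace_0 by blast+
  then have "closest_point (E x0) (X x0) \<in> E x0" by (rule closest_point_in_set)
  then have "norm (X x0 - closest_point (E x0) (X x0)) > 0" using assms(5) x0 by auto
  then show ?thesis using that mn by blast
qed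

lemma rn_sum_bound:
  fixes L :: "'a::euclidean_space \<Rightarrow> 'a"
  assumes L: "bounded_linear L" and S: "subspace S" "S \<noteq> {0}" and m: "m > 0"
    and cb: "\<And>a f. f \<in> S \<Longrightarrow> \<bar>a\<bar> * m \<le> norm (a *\<^sub>R Xv + f)"
    and Xn: "norm Xv \<le> Xn" and c: "norm (L Xv) \<le> c"
  shows "restr_norm L (subsum S (span {Xv})) \<le> c / m + restr_norm L S * (1 + Xn / m)"
proof (rule rn_le)
  show "subspace (subsum S (span {Xv}))" using S by (simp add: subsum_subspace subspace_span)
  obtain f where f: "f \<in> S" "f \<noteq> 0" using S subspace_0 by blast
  then have "f + 0 \<in> subsum S (span {Xv})" unfolding subsum_def using span_zero by blast
  then show "subsum S (span {Xv}) \<noteq> {0}" using f by auto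
  have R0: "0 \<le> restr_norm L S" using rn_nonneg[OF L S] .
  have c0: "0 \<le> c" using c norm_ge_zero order_trans by blast
  fix w assume w: "w \<in> subsum S (span {Xv})" "norm w = 1"
  then obtain f b where fb: "w = f + b" "f \<in> S" "b \<in> span {Xv}" unfolding subsum_def by blast
  then obtain a where a: "b = a *\<^sub>R Xv" by (auto simp: span_singleton)
  have "\<bar>a\<bar> * m \<le> 1" using cb[OF fb(2), of a] w(2) fb(1) a by (simp add: add.commute)
  then have a1: "\<bar>a\<bar> \<le> 1 / m" using m by (simp add: field_simps)
  have "norm f \<le> norm w + norm (a *\<^sub>R Xv)" using fb a norm_triangle_ineq4[of w "a *\<^sub>R Xv"] by simp
  also have "\<dots> \<le> 1 + (1 / m) * Xn"
  proof -
    have "\<bar>a\<bar> * norm Xv \<le> (1 / m) * Xn" by (rule mult_mono[OF a1 Xn]) (use m in auto)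
    then show ?thesis using w(2) by simp
  qed
  finally have nf: "norm f \<le> 1 + Xn / m" by simp
  have "norm (L w) = norm (L f + a *\<^sub>R L Xv)"
    using fb a linear_add[OF bounded_linear.linear[OF L]] linear_scale[OF bounded_linear.linear[OF L]] by simp
  also have "\<dots> \<le> norm (L f) + \<bar>a\<bar> * norm (L Xv)" by (rule order_trans[OF norm_triangle_ineq]) simp
  also have "\<dots> \<le> restr_norm L S * norm f + (1 / m) * c"
    by (intro add_mono rn_vec[OF L S(1) fb(2)] mult_mono a1 c) (use m in auto)
  also have "\<dots> \<le> restr_norm L S * (1 + Xn / m) + c / m"
    using mult_left_mono[OF nf R0] by simp
  finally show "norm (L w) \<le> c / m + restr_norm L S * (1 + Xn / m)" by simp
qed

lemma exp_comb:
  fixes P :: real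
  assumes "mu > 0" "lam > 0" "t > 0" "0 \<le> \<alpha>" "0 \<le> \<beta>"
    "P \<le> \<alpha> * exp (-mu * t) + \<beta> * exp (-lam * t)"
  shows "P < (\<alpha> + \<beta> + 1) * exp (- (min mu lam) * t)"
proof -
  have "exp (-mu * t) \<le> exp (- (min mu lam) * t)" "exp (-lam * t) \<le> exp (- (min mu lam) * t)"
    using assms(3) by (auto intro: mult_right_mono)
  then have "P \<le> (\<alpha> + \<beta>) * exp (- (min mu lam) * t)"
    using assms(4,5,6) mult_left_mono by (smt (verit) distrib_right)
  also have "\<dots> < (\<alpha> + \<beta> + 1) * exp (- (min mu lam) * t)" by (simp add: distrib_right)
  finally show ?thesis .
qed

theorem proposition2p2:
  fixes M \<Lambda> :: "'a::euclidean_space set"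
    and X :: "'a \<Rightarrow> 'a"
    and \<phi> :: "real \<Rightarrow> 'a \<Rightarrow> 'a"
    and D :: "real \<Rightarrow> 'a \<Rightarrow> 'a \<Rightarrow> 'a"
    and E F :: "'a \<Rightarrow> 'a set"
  assumes M: "compact M" "c1_submanifold M"
    and X: "c1_field X" "\<forall>x\<in>M. X x \<in> tangent_space M x"
    and flow: "\<forall>x\<in>M. \<phi> 0 x = x \<and> (\<forall>t. \<phi> t x \<in> M \<and>
                 ((\<lambda>s. \<phi> s x) has_vector_derivative X (\<phi> t x)) (at t))"
    and deriv: "\<forall>x\<in>M. \<forall>t. (\<phi> t has_derivative D t x) (at x within M)"
    and Lambda: "compact \<Lambda>" "\<Lambda> \<subseteq> M" "\<forall>x\<in>\<Lambda>. \<forall>t. \<phi> t x \<in> \<Lambda>" "\<forall>x\<in>\<Lambda>. X x \<noteq> 0"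
    and pds: "partially_dominated_splitting M \<Lambda> X \<phi> D E F"
    and hyp: "uniformly_contracting \<Lambda> D E \<or> uniformly_expanding \<Lambda> D E \<or>
              uniformly_contracting \<Lambda> D F \<or> uniformly_expanding \<Lambda> D F"
  shows "dominated_splitting M \<Lambda> \<phi> D E (\<lambda>x. subsum (span {X x}) (F x)) \<or>
         dominated_splitting M \<Lambda> \<phi> D (\<lambda>x. subsum (E x) (span {X x})) F"
proof -
  note P = pds[unfolded partially_dominated_splitting_def]
  have sE: "\<forall>x\<in>\<Lambda>. subspace (E x)" and sF: "\<forall>x\<in>\<Lambda>. subspace (F x)"
    and nE: "\<forall>x\<in>\<Lambda>. E x \<noteq> {0}" and nF: "\<forall>x\<in>\<Lambda>. F x \<noteq> {0}"
    and ind: "\<And>x a b c. x \<in> \<Lambda> \<Longrightarrow> a \<in> E x \<Longrightarrow> b \<in> span {X x} \<Longrightarrow> c \<in> F x \<Longrightarrow> a + b + c = 0 \<Longrightarrow>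
                 a = 0 \<and> b = 0 \<and> c = 0"
    and tan: "\<forall>x\<in>\<Lambda>. subsum (subsum (E x) (span {X x})) (F x) = tangent_space M x"
    using P by blast+
  have iE: "\<And>x t. x \<in> \<Lambda> \<Longrightarrow> D t x ` E x = E (\<phi> t x)"
    and iF: "\<And>x t. x \<in> \<Lambda> \<Longrightarrow> D t x ` F x = F (\<phi> t x)"
    using P unfolding invariant_subbundle_def by blast+
  have cE: "continuous_subbundle \<Lambda> E" and cF: "continuous_subbundle \<Lambda> F" using P by blast+
  obtain K lam where K: "K > 0" "lam > 0" and dom: "\<And>x t. x \<in> \<Lambda> \<Longrightarrow> t > 0 \<Longrightarrow>
        restr_norm (D t x) (E x) * restr_norm (D (-t) (\<phi> t x)) (F (\<phi> t x)) < K * exp (-lam * t)"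
    using P by blast
  have LM: "x \<in> M" if "x \<in> \<Lambda>" for x using that Lambda(2) by blast
  have phiL: "\<phi> t x \<in> \<Lambda>" if "x \<in> \<Lambda>" for x t using that Lambda(3) by blast
  have phiM: "\<phi> t x \<in> M" if "x \<in> M" for x t using that flow by blast
  have lin: "bounded_linear (D t x)" if "x \<in> M" for x t
    using deriv that has_derivative_bounded_linear by blast
  have linL: "bounded_linear (D t x)" if "x \<in> \<Lambda>" for x t using lin LM that by blast
  have cXU: "continuous_on UNIV X"
  proof -
    obtain X' :: "'a \<Rightarrow> 'a \<Rightarrow>\<^sub>L 'a" where d: "\<And>y. (X has_derivative blinfun_apply (X' y)) (at y)"
      using X(1) unfolding c1_field_def by blast
    show ?thesis by (rule continuous_at_imp_continuous_on) (use has_derivative_continuous[OF d] in blast)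
  qed
  then have cX: "continuous_on \<Lambda> X" by (rule continuous_on_subset) simp
  have "compact (X ` M)" by (rule compact_continuous_image[OF continuous_on_subset[OF cXU subset_UNIV] M(1)])
  then have "bounded (X ` M)" by (rule compact_imp_bounded)
  then obtain Xm where Xm0: "\<forall>z\<in>X ` M. norm z \<le> Xm" unfolding bounded_iff by blast
  define Xn where "Xn = max Xm 0"
  have Xn: "norm (X z) \<le> Xn" if "z \<in> M" for z using Xm0 that unfolding Xn_def by fastforce
  have Xn0: "0 \<le> Xn" unfolding Xn_def by simp
  have XnE: "\<forall>x\<in>\<Lambda>. X x \<notin> E x"
  proof (intro ballI notI)
    fix x assume x: "x \<in> \<Lambda>" "X x \<in> E x"
    have "X x + (- X x) + 0 = 0" by simp
    moreover have "- X x \<in> span {X x}" by (simp add: span_base span_neg)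
    moreover have "0 \<in> F x" using sF x subspace_0 by blast
    ultimately have "X x = 0" using ind[OF x(1) x(2)] by blast
    then show False using Lambda(4) x by blast
  qed
  have XnF: "\<forall>x\<in>\<Lambda>. X x \<notin> F x"
  proof (intro ballI notI)
    fix x assume x: "x \<in> \<Lambda>" "X x \<in> F x"
    have "0 + X x + (- X x) = 0" by simp
    moreover have "X x \<in> span {X x}" by (simp add: span_base)
    moreover have "- X x \<in> F x" using sF x subspace_neg by blast
    moreover have "0 \<in> E x" using sE x subspace_0 by blast
    ultimately have "X x = 0" using ind[OF x(1)] by blast
    then show False using Lambda(4) x by blast
  qed
  have tanE: "e \<in> tangent_space M x" if "x \<in> \<Lambda>" "e \<in> E x" for x e
  proof -
    have "e + 0 + 0 \<in> subsum (subsum (E x) (span {X x})) (F x)"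
      unfolding subsum_def using that sF subspace_0 span_zero by blast
    then show ?thesis using tan that by simp
  qed
  have tanF: "f \<in> tangent_space M x" if "x \<in> \<Lambda>" "f \<in> F x" for x f
  proof -
    have "0 + 0 + f \<in> subsum (subsum (E x) (span {X x})) (F x)"
      unfolding subsum_def using that sE subspace_0 span_zero by blast
    then show ?thesis using tan that by simp
  qed
  obtain mE where mE: "mE > 0" "\<And>x. x \<in> \<Lambda> \<Longrightarrow> mE \<le> norm (X x - closest_point (E x) (X x))"
    using m_bound[OF Lambda(1) cE sE cX XnE] by blast
  obtain mF where mF: "mF > 0" "\<And>x. x \<in> \<Lambda> \<Longrightarrow> mF \<le> norm (X x - closest_point (F x) (X x))"
    using m_bound[OF Lambda(1) cF sF cX XnF] by blast
  have DX: "D t x (X x) = X (\<phi> t x)" if "x \<in> M" for x t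
    by (rule D_X[OF X(1) M(1) flow deriv that])
  have Dinv: "D (-t) (\<phi> t x) (D t x v) = v" if "x \<in> M" "v \<in> tangent_space M x" for x t v
    by (rule D_inv[OF X(1) M(1) flow deriv that])
  have RE0: "0 \<le> restr_norm (D t x) (E x)" if "x \<in> \<Lambda>" for x t
    using rn_nonneg[OF linL] sE nE that by blast
  have RF0: "0 \<le> restr_norm (D (-t) (\<phi> t x)) (F (\<phi> t x))" if "x \<in> \<Lambda>" for x t
    using rn_nonneg[OF linL[OF phiL[OF that]]] sF nF phiL[OF that] by blast
  have span_img: "D t x ` span {X x} = span {X (\<phi> t x)}" if "x \<in> \<Lambda>" for x t
  proof -
    have "span (D t x ` {X x}) = D t x ` span {X x}"
      by (rule span_linear_image[OF bounded_linear.linear[OF linL[OF that]]])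
    then show ?thesis using DX[OF LM[OF that]] by simp
  qed
  have dich: "(\<exists>C mu. C > 0 \<and> mu > 0 \<and> (\<forall>x\<in>\<Lambda>. \<forall>t>0. restr_norm (D t x) (E x) \<le> C * exp (-mu * t))) \<or>
              (\<exists>C mu. C > 0 \<and> mu > 0 \<and> (\<forall>x\<in>\<Lambda>. \<forall>t>0. restr_norm (D (-t) (\<phi> t x)) (F (\<phi> t x)) \<le> C * exp (-mu * t)))"
  proof -
    have expm: "exp (-lam * t) * exp (-mu * t) = exp (-(lam + mu) * t)" for t mu :: real
      by (simp add: exp_add[symmetric] algebra_simps)
    consider (Ec) "uniformly_contracting \<Lambda> D E" | (Ee) "uniformly_expanding \<Lambda> D E"
      | (Fc) "uniformly_contracting \<Lambda> D F" | (Fe) "uniformly_expanding \<Lambda> D F" using hyp by blast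
    then show ?thesis
    proof cases
      case Ec
      then obtain C mu where C: "C > 0" "mu > 0"
        and b: "\<forall>x\<in>\<Lambda>. \<forall>t\<ge>0. restr_norm (D t x) (E x) \<le> C * exp (-mu * t)"
        unfolding uniformly_contracting_def by blast
      then show ?thesis by (intro disjI1 exI[of _ C] exI[of _ mu]) auto
    next
      case Fe
      then obtain C mu where C: "C > 0" "mu > 0"
        and b: "\<forall>x\<in>\<Lambda>. \<forall>t\<ge>0. restr_norm (D (-t) x) (F x) \<le> C * exp (-mu * t)"
        unfolding uniformly_expanding_def by blast
      have "\<forall>x\<in>\<Lambda>. \<forall>t>0. restr_norm (D (-t) (\<phi> t x)) (F (\<phi> t x)) \<le> C * exp (-mu * t)"
        using b phiL by auto
      then show ?thesis using C by blast
    next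
      case Fc
      then obtain C mu where C: "C > 0" "mu > 0"
        and b: "\<forall>x\<in>\<Lambda>. \<forall>t\<ge>0. restr_norm (D t x) (F x) \<le> C * exp (-mu * t)"
        unfolding uniformly_contracting_def by blast
      have key: "1 \<le> restr_norm (D (-t) (\<phi> t x)) (F (\<phi> t x)) * (C * exp (-mu * t))"
        if x: "x \<in> \<Lambda>" "t > 0" for x t
      proof -
        obtain f0 where f0: "f0 \<in> F x" "norm f0 = 1" using unit_in_sub[of "F x"] sF nF x(1) by blast
        have fy: "D t x f0 \<in> F (\<phi> t x)" using iF[OF x(1), of t] f0 by blast
        have "norm (D t x f0) \<le> restr_norm (D t x) (F x)" by (rule rn_ge[OF linL[OF x(1)] f0])
        also have "\<dots> \<le> C * exp (-mu * t)" using b x(1) less_imp_le[OF x(2)] by blast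
        finally have n1: "norm (D t x f0) \<le> C * exp (-mu * t)" .
        have "1 = norm (D (-t) (\<phi> t x) (D t x f0))" using Dinv[OF LM[OF x(1)] tanF[OF x(1) f0(1)]] f0 by simp
        also have "\<dots> \<le> restr_norm (D (-t) (\<phi> t x)) (F (\<phi> t x)) * norm (D t x f0)"
          by (rule rn_vec[OF linL[OF phiL[OF x(1)]]]) (use sF phiL x fy in auto)
        also have "\<dots> \<le> restr_norm (D (-t) (\<phi> t x)) (F (\<phi> t x)) * (C * exp (-mu * t))"
          by (rule mult_left_mono[OF n1 RF0[OF x(1)]])
        finally show ?thesis .
      qed
      have "\<forall>x\<in>\<Lambda>. \<forall>t>0. restr_norm (D t x) (E x) \<le> (K * C) * exp (-(lam + mu) * t)"
      proof (intro ballI allI impI)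
        fix x and t :: real assume x: "x \<in> \<Lambda>" "t > 0"
        have "restr_norm (D t x) (E x) * 1 \<le> restr_norm (D t x) (E x) * (restr_norm (D (-t) (\<phi> t x)) (F (\<phi> t x)) * (C * exp (-mu * t)))"
          by (rule mult_left_mono[OF key[OF x] RE0[OF x(1)]])
        also have "\<dots> = (restr_norm (D t x) (E x) * restr_norm (D (-t) (\<phi> t x)) (F (\<phi> t x))) * (C * exp (-mu * t))"
          by (simp add: mult.assoc)
        also have "\<dots> \<le> (K * exp (-lam * t)) * (C * exp (-mu * t))"
          by (rule mult_right_mono[OF less_imp_le[OF dom[OF x]]]) (use C in simp)
        also have "\<dots> = (K * C) * (exp (-lam * t) * exp (-mu * t))" by (simp add: algebra_simps)
        finally show "restr_norm (D t x) (E x) \<le> (K * C) * exp (-(lam + mu) * t)" unfolding expm by simp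
      qed
      then show ?thesis using K C by (intro disjI1 exI[of _ "K * C"] exI[of _ "lam + mu"]) auto
    next
      case Ee
      then obtain C mu where C: "C > 0" "mu > 0"
        and b: "\<forall>x\<in>\<Lambda>. \<forall>t\<ge>0. restr_norm (D (-t) x) (E x) \<le> C * exp (-mu * t)"
        unfolding uniformly_expanding_def by blast
      have key: "1 \<le> restr_norm (D t x) (E x) * (C * exp (-mu * t))"
        if x: "x \<in> \<Lambda>" "t > 0" for x t
      proof -
        obtain e0 where e0: "e0 \<in> E x" "norm e0 = 1" using unit_in_sub[of "E x"] sE nE x(1) by blast
        have ey: "D t x e0 \<in> E (\<phi> t x)" using iE[OF x(1), of t] e0 by blast
        have n1: "norm (D t x e0) \<le> restr_norm (D t x) (E x)" by (rule rn_ge[OF linL[OF x(1)] e0])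
        have "1 = norm (D (-t) (\<phi> t x) (D t x e0))" using Dinv[OF LM[OF x(1)] tanE[OF x(1) e0(1)]] e0 by simp
        also have "\<dots> \<le> restr_norm (D (-t) (\<phi> t x)) (E (\<phi> t x)) * norm (D t x e0)"
          by (rule rn_vec[OF linL[OF phiL[OF x(1)]]]) (use sE phiL x ey in auto)
        also have "\<dots> \<le> (C * exp (-mu * t)) * norm (D t x e0)"
          by (rule mult_right_mono) (use b phiL x in auto)
        also have "\<dots> \<le> (C * exp (-mu * t)) * restr_norm (D t x) (E x)"
          by (rule mult_left_mono[OF n1]) (use C in simp)
        finally show ?thesis by (simp add: mult.commute)
      qed
      have "\<forall>x\<in>\<Lambda>. \<forall>t>0. restr_norm (D (-t) (\<phi> t x)) (F (\<phi> t x)) \<le> (K * C) * exp (-(lam + mu) * t)"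
      proof (intro ballI allI impI)
        fix x and t :: real assume x: "x \<in> \<Lambda>" "t > 0"
        have "restr_norm (D (-t) (\<phi> t x)) (F (\<phi> t x)) * 1 \<le> restr_norm (D (-t) (\<phi> t x)) (F (\<phi> t x)) * (restr_norm (D t x) (E x) * (C * exp (-mu * t)))"
          by (rule mult_left_mono[OF key[OF x] RF0[OF x(1)]])
        also have "\<dots> = (restr_norm (D t x) (E x) * restr_norm (D (-t) (\<phi> t x)) (F (\<phi> t x))) * (C * exp (-mu * t))"
          by (simp add: algebra_simps)
        also have "\<dots> \<le> (K * exp (-lam * t)) * (C * exp (-mu * t))"
          by (rule mult_right_mono[OF less_imp_le[OF dom[OF x]]]) (use C in simp)
        also have "\<dots> = (K * C) * (exp (-lam * t) * exp (-mu * t))" by (simp add: algebra_simps)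
        finally show "restr_norm (D (-t) (\<phi> t x)) (F (\<phi> t x)) \<le> (K * C) * exp (-(lam + mu) * t)" unfolding expm by simp
      qed
      then show ?thesis using K C by (intro disjI2 exI[of _ "K * C"] exI[of _ "lam + mu"]) auto
    qed
  qed
  from dich show ?thesis
  proof
    assume "\<exists>C mu. C > 0 \<and> mu > 0 \<and> (\<forall>x\<in>\<Lambda>. \<forall>t>0. restr_norm (D t x) (E x) \<le> C * exp (-mu * t))"
    then obtain C mu where C: "C > 0" "mu > 0"
      and bE: "\<And>x t. x \<in> \<Lambda> \<Longrightarrow> t > 0 \<Longrightarrow> restr_norm (D t x) (E x) \<le> C * exp (-mu * t)" by blast
    let ?H = "\<lambda>x. subsum (span {X x}) (F x)"
    have Hc: "?H x = subsum (F x) (span {X x})" for x by (rule subsum_commute)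
    have sH: "subspace (?H x)" if "x \<in> \<Lambda>" for x using sF that by (simp add: subsum_subspace subspace_span)
    have "dominated_splitting M \<Lambda> \<phi> D E ?H"
      unfolding dominated_splitting_def
    proof (intro conjI ballI)
      fix x assume x: "x \<in> \<Lambda>"
      show "subspace (E x)" using sE x by blast
      show "subspace (?H x)" by (rule sH[OF x])
      show "E x \<noteq> {0}" using nE x by blast
      show "?H x \<noteq> {0}"
      proof
        assume h: "?H x = {0}"
        have "X x + 0 \<in> ?H x" unfolding subsum_def using sF x subspace_0 span_base[of "X x" "{X x}"] by blast
        then show False using h Lambda(4) x by simp
      qed
      show "E x \<inter> ?H x = {0}"
      proof
        show "E x \<inter> ?H x \<subseteq> {0}"
        proof
          fix e assume e: "e \<in> E x \<inter> ?H x"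
          then obtain b f where bf: "e = b + f" "b \<in> span {X x}" "f \<in> F x" unfolding subsum_def by blast
          have "e + (-b) + (-f) = 0" using bf by simp
          moreover have "-b \<in> span {X x}" using bf span_neg by blast
          moreover have "-f \<in> F x" using bf sF x subspace_neg by blast
          ultimately have "e = 0" using ind[OF x] e by blast
          then show "e \<in> {0}" by simp
        qed
        show "{0} \<subseteq> E x \<inter> ?H x" using sE sH x subspace_0 by blast
      qed
      show "subsum (E x) (?H x) = tangent_space M x" using tan x by (simp add: subsum_assoc)
    next
      show "invariant_subbundle \<Lambda> \<phi> D E" using P by blast
      show "invariant_subbundle \<Lambda> \<phi> D ?H" unfolding invariant_subbundle_def
      proof (intro ballI allI)
        fix x t assume x: "x \<in> \<Lambda>"
        show "D t x ` ?H x = ?H (\<phi> t x)"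
          using subsum_image[OF bounded_linear.linear[OF linL[OF x]]] span_img[OF x] iF[OF x] by simp
      qed
      show "continuous_subbundle \<Lambda> E" by (rule cE)
      show "continuous_subbundle \<Lambda> ?H" unfolding Hc by (rule sum_bundle_cont[OF cF sF cX XnF])
      show "\<exists>K lam. K > 0 \<and> lam > 0 \<and> (\<forall>x\<in>\<Lambda>. \<forall>t>0.
        restr_norm (D t x) (E x) * restr_norm (D (-t) (\<phi> t x)) (?H (\<phi> t x)) < K * exp (-lam * t))"
      proof (rule exI[of _ "(Xn / mF) * C + (1 + Xn / mF) * K + 1"], rule exI[of _ "min mu lam"], intro conjI ballI allI impI)
        show "0 < (Xn / mF) * C + (1 + Xn / mF) * K + 1" using Xn0 mF(1) C K by (simp add: add_nonneg_pos add_pos_nonneg)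
        show "0 < min mu lam" using C K by simp
        fix x and t :: real assume x: "x \<in> \<Lambda>" "t > 0"
        have y: "\<phi> t x \<in> \<Lambda>" by (rule phiL[OF x(1)])
        have hb: "restr_norm (D (-t) (\<phi> t x)) (?H (\<phi> t x)) \<le> Xn / mF + restr_norm (D (-t) (\<phi> t x)) (F (\<phi> t x)) * (1 + Xn / mF)"
          unfolding Hc
        proof (rule rn_sum_bound[OF linL[OF y]])
          show "subspace (F (\<phi> t x))" "F (\<phi> t x) \<noteq> {0}" using sF nF y by blast+
          show "mF > 0" by (rule mF(1))
          show "\<bar>a\<bar> * mF \<le> norm (a *\<^sub>R X (\<phi> t x) + f)" if "f \<in> F (\<phi> t x)" for a f
            by (rule coeff_bound[OF _ that mF(2)[OF y]]) (use sF y in blast)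
          show "norm (X (\<phi> t x)) \<le> Xn" using Xn LM[OF y] by blast
          show "norm (D (-t) (\<phi> t x) (X (\<phi> t x))) \<le> Xn" using DX[OF LM[OF y]] Xn phiM LM[OF y] by simp
        qed
        have "restr_norm (D t x) (E x) * restr_norm (D (-t) (\<phi> t x)) (?H (\<phi> t x))
            \<le> restr_norm (D t x) (E x) * (Xn / mF + restr_norm (D (-t) (\<phi> t x)) (F (\<phi> t x)) * (1 + Xn / mF))"
          by (rule mult_left_mono[OF hb RE0[OF x(1)]])
        also have "\<dots> = (Xn / mF) * restr_norm (D t x) (E x) + (1 + Xn / mF) * (restr_norm (D t x) (E x) * restr_norm (D (-t) (\<phi> t x)) (F (\<phi> t x)))"
          by (simp add: algebra_simps)
        also have "\<dots> \<le> (Xn / mF) * (C * exp (-mu * t)) + (1 + Xn / mF) * (K * exp (-lam * t))"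
          by (intro add_mono mult_left_mono bE[OF x] less_imp_le[OF dom[OF x]]) (use Xn0 mF in auto)
        finally have fin: "restr_norm (D t x) (E x) * restr_norm (D (-t) (\<phi> t x)) (?H (\<phi> t x))
            \<le> ((Xn / mF) * C) * exp (-mu * t) + ((1 + Xn / mF) * K) * exp (-lam * t)" by (simp add: mult.assoc)
        show "restr_norm (D t x) (E x) * restr_norm (D (-t) (\<phi> t x)) (?H (\<phi> t x))
            < ((Xn / mF) * C + (1 + Xn / mF) * K + 1) * exp (- (min mu lam) * t)"
          by (rule exp_comb[OF C(2) K(2) x(2) _ _ fin]) (use Xn0 mF C K in auto)
      qed
    qed
    then show ?thesis by blast
  next
    assume "\<exists>C mu. C > 0 \<and> mu > 0 \<and> (\<forall>x\<in>\<Lambda>. \<forall>t>0. restr_norm (D (-t) (\<phi> t x)) (F (\<phi> t x)) \<le> C * exp (-mu * t))"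
    then obtain C mu where C: "C > 0" "mu > 0"
      and bF: "\<And>x t. x \<in> \<Lambda> \<Longrightarrow> t > 0 \<Longrightarrow> restr_norm (D (-t) (\<phi> t x)) (F (\<phi> t x)) \<le> C * exp (-mu * t)" by blast
    let ?G = "\<lambda>x. subsum (E x) (span {X x})"
    have sG: "subspace (?G x)" if "x \<in> \<Lambda>" for x using sE that by (simp add: subsum_subspace subspace_span)
    have "dominated_splitting M \<Lambda> \<phi> D ?G F"
      unfolding dominated_splitting_def
    proof (intro conjI ballI)
      fix x assume x: "x \<in> \<Lambda>"
      show "subspace (F x)" using sF x by blast
      show "subspace (?G x)" by (rule sG[OF x])
      show "F x \<noteq> {0}" using nF x by blast
      show "?G x \<noteq> {0}"
      proof
        assume h: "?G x = {0}"
        have "0 + X x \<in> ?G x" unfolding subsum_def using sE x subspace_0 span_base[of "X x" "{X x}"] by blast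
        then show False using h Lambda(4) x by simp
      qed
      show "?G x \<inter> F x = {0}"
      proof
        show "?G x \<inter> F x \<subseteq> {0}"
        proof
          fix f assume f: "f \<in> ?G x \<inter> F x"
          then obtain e b where eb: "f = e + b" "e \<in> E x" "b \<in> span {X x}" unfolding subsum_def by blast
          have "e + b + (-f) = 0" using eb by simp
          moreover have "-f \<in> F x" using f sF x subspace_neg by blast
          ultimately have "-f = 0" using ind[OF x] eb by blast
          then show "f \<in> {0}" by simp
        qed
        show "{0} \<subseteq> ?G x \<inter> F x" using sF sG x subspace_0 by blast
      qed
      show "subsum (?G x) (F x) = tangent_space M x" using tan x by simp
    next
      show "invariant_subbundle \<Lambda> \<phi> D F" using P by blast
      show "invariant_subbundle \<Lambda> \<phi> D ?G" unfolding invariant_subbundle_def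
      proof (intro ballI allI)
        fix x t assume x: "x \<in> \<Lambda>"
        show "D t x ` ?G x = ?G (\<phi> t x)"
          using subsum_image[OF bounded_linear.linear[OF linL[OF x]]] span_img[OF x] iE[OF x] by simp
      qed
      show "continuous_subbundle \<Lambda> F" by (rule cF)
      show "continuous_subbundle \<Lambda> ?G" by (rule sum_bundle_cont[OF cE sE cX XnE])
      show "\<exists>K lam. K > 0 \<and> lam > 0 \<and> (\<forall>x\<in>\<Lambda>. \<forall>t>0.
        restr_norm (D t x) (?G x) * restr_norm (D (-t) (\<phi> t x)) (F (\<phi> t x)) < K * exp (-lam * t))"
      proof (rule exI[of _ "(Xn / mE) * C + (1 + Xn / mE) * K + 1"], rule exI[of _ "min mu lam"], intro conjI ballI allI impI)
        show "0 < (Xn / mE) * C + (1 + Xn / mE) * K + 1" using Xn0 mE(1) C K by (simp add: add_nonneg_pos add_pos_nonneg)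
        show "0 < min mu lam" using C K by simp
        fix x and t :: real assume x: "x \<in> \<Lambda>" "t > 0"
        have gb: "restr_norm (D t x) (?G x) \<le> Xn / mE + restr_norm (D t x) (E x) * (1 + Xn / mE)"
        proof (rule rn_sum_bound[OF linL[OF x(1)]])
          show "subspace (E x)" "E x \<noteq> {0}" using sE nE x by blast+
          show "mE > 0" by (rule mE(1))
          show "\<bar>a\<bar> * mE \<le> norm (a *\<^sub>R X x + e)" if "e \<in> E x" for a e
            by (rule coeff_bound[OF _ that mE(2)[OF x(1)]]) (use sE x in blast)
          show "norm (X x) \<le> Xn" using Xn LM[OF x(1)] by blast
          show "norm (D t x (X x)) \<le> Xn" using DX[OF LM[OF x(1)]] Xn phiM LM[OF x(1)] by simp
        qed
        have "restr_norm (D t x) (?G x) * restr_norm (D (-t) (\<phi> t x)) (F (\<phi> t x))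
            \<le> (Xn / mE + restr_norm (D t x) (E x) * (1 + Xn / mE)) * restr_norm (D (-t) (\<phi> t x)) (F (\<phi> t x))"
          by (rule mult_right_mono[OF gb RF0[OF x(1)]])
        also have "\<dots> = (Xn / mE) * restr_norm (D (-t) (\<phi> t x)) (F (\<phi> t x)) + (1 + Xn / mE) * (restr_norm (D t x) (E x) * restr_norm (D (-t) (\<phi> t x)) (F (\<phi> t x)))"
          by (simp add: algebra_simps)
        also have "\<dots> \<le> (Xn / mE) * (C * exp (-mu * t)) + (1 + Xn / mE) * (K * exp (-lam * t))"
          by (intro add_mono mult_left_mono bF[OF x] less_imp_le[OF dom[OF x]]) (use Xn0 mE in auto)
        finally have fin: "restr_norm (D t x) (?G x) * restr_norm (D (-t) (\<phi> t x)) (F (\<phi> t x))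
            \<le> ((Xn / mE) * C) * exp (-mu * t) + ((1 + Xn / mE) * K) * exp (-lam * t)" by (simp add: mult.assoc)
        show "restr_norm (D t x) (?G x) * restr_norm (D (-t) (\<phi> t x)) (F (\<phi> t x))
            < ((Xn / mE) * C + (1 + Xn / mE) * K + 1) * exp (- (min mu lam) * t)"
          by (rule exp_comb[OF C(2) K(2) x(2) _ _ fin]) (use Xn0 mE C K in auto)
      qed
    qed
    then show ?thesis by blast
  qed
qed

end
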